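(* Assume each $L_r:Lip_d(I)\to Lip_d(I)$ ($r\in\mathbb{N}$) is linear and that there is a linear operator $L$ on $Lip_d(I)$ with $\|Lf\|_\infty=\sup_{r\in\mathbb{N}}\|L_rf\|_\infty$ for all $f\in Lip_d(I)$. Then the non-stationary fractal operator $\mathfrak{F}^\alpha_b:Lip_d(I)\to C(I)$, $\mathfrak{F}^\alpha_b(f)=f^\alpha_b$, is relatively Lipschitz with respect to $L$: for all $f,g\in Lip_d(I)$, $$\|\mathfrak{F}^\alpha_b(f)-\mathfrak{F}^\alpha_b(g)\|_\infty\le\frac{1}{1-\|\alpha\|_\infty}\|f-g\|_\infty+\frac{\|\alpha\|_\infty}{1-\|\alpha\|_\infty}\|Lf-Lg\|_\infty,$$ so the $L$-Lipschitz constant of $\mathfrak{F}^\alpha_b$ does not exceed $\frac{\|\alpha\|_\infty}{1-\|\alpha\|_\infty}$.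
   Context: Setting: $I=[x_0,x_N]$ with partition $\Delta: x_0<x_1<\dots<x_N$, $I_i=[x_{i-1},x_i]$, $l_i:I\to I_i$ the increasing affine bijection $l_i(x)=\frac{x_i-x_{i-1}}{x_N-x_0}x+\frac{x_Nx_{i-1}-x_0x_i}{x_N-x_0}$, and $Q_i=l_i^{-1}$. Scaling functions $\alpha_{i,r}:I\to\mathbb{R}$ ($i=1,\dots,N$, $r\in\mathbb{N}$) are continuous with $\|\alpha\|_\infty:=\sup_{r}\max_i\|\alpha_{i,r}\|_\infty<1$. $Lip_d(I)$ ($0<d\le1$) is the space of real functions $g$ on $I$ with $\sup_{x\ne y}|g(x)-g(y)|/|x-y|^d<\infty$, regarded as a subset of $C(I)$ with the supremum norm. $L_r$ satisfy $(L_rg)(x_0)=g(x_0)$, $(L_rg)(x_N)=g(x_N)$ and $\sup_r\|L_r\|_\infty<\infty$ (operator norms w.r.t. the sup norm). An operator $\mathcal{T}_1$ is relatively Lipschitz w.r.t. $\mathcal{T}_2$ if $\|\mathcal{T}_1u-\mathcal{T}_1v\|\le M_1\|u-v\|+M_2\|\mathcal{T}_2u-\mathcal{T}_2v\|$ for some $M_1,M_2\ge0$ and all $u,v$; the infimum of such $M_2$ is the $\mathcal{T}_2$-Lipschitz constant. Non-stationary $\alpha$-fractal function: for $f\in C(I)$ and base functions $b_r\in C(I)$ with $b_r(x_0)=f(x_0)$, $b_r(x_N)=f(x_N)$, $\sup_r\|b_r\|_\infty<\infty$, let $C_f(I)=\{g\in C(I):g(x_0)=f(x_0),g(x_N)=f(x_N)\}$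 and $T^{\alpha_r}:C_f(I)\to C_f(I)$, $(T^{\alpha_r}g)(x)=f(x)+\alpha_{i,r}(Q_i(x))(g-b_r)(Q_i(x))$ for $x\in I_i$. For every $g\in C_f(I)$, $T^{\alpha_1}\circ\cdots\circ T^{\alpha_r}g$ converges uniformly to a function independent of $g$; this is the non-stationary $\alpha$-fractal function. $f^\alpha_b$ denotes it for $f\in Lip_d(I)$ with $b_r=L_rf$. *)

theory Defs
  imports "HOL-Analysis.Analysis"
begin

(* Partition x_0 < ... < x_N of I = [x_0, x_N], given by xs :: nat => real. *)

definition Ivl :: "(nat \<Rightarrow> real) \<Rightarrow> nat \<Rightarrow> real set" where
  "Ivl xs N = {xs 0 .. xs N}"

definition supnorm :: "real set \<Rightarrow> (real \<Rightarrow> real) \<Rightarrow> real" where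
  "supnorm S h = (SUP x\<in>S. \<bar>h x\<bar>)"

definition Lip :: "real \<Rightarrow> real set \<Rightarrow> (real \<Rightarrow> real) set" where
  "Lip d S = {g. \<exists>K. \<forall>x\<in>S. \<forall>y\<in>S. \<bar>g x - g y\<bar> \<le> K * \<bar>x - y\<bar> powr d}"

(* Q_i = l_i^{-1} : I_i -> I *)
definition Qmap :: "(nat \<Rightarrow> real) \<Rightarrow> nat \<Rightarrow> nat \<Rightarrow> real \<Rightarrow> real" where
  "Qmap xs N i x = xs 0 + (x - xs (i - 1)) * (xs N - xs 0) / (xs i - xs (i - 1))"

(* index i with x in I_i (the smallest such one at the knots) *)
definition idx :: "(nat \<Rightarrow> real) \<Rightarrow> nat \<Rightarrow> real \<Rightarrow> nat" where
  "idx xs N x = (LEAST i. 1 \<le> i \<and> x \<le> xs i)"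

(* (T^{alpha_r} g)(x) = f x + alpha_{i,r}(Q_i x) * (g - b_r)(Q_i x), x in I_i;
   alpha i r is the scaling function alpha_{i,r} *)
definition Top :: "(nat \<Rightarrow> real) \<Rightarrow> nat \<Rightarrow> (nat \<Rightarrow> nat \<Rightarrow> real \<Rightarrow> real)
    \<Rightarrow> nat \<Rightarrow> (real \<Rightarrow> real) \<Rightarrow> (real \<Rightarrow> real) \<Rightarrow> (real \<Rightarrow> real) \<Rightarrow> real \<Rightarrow> real" where
  "Top xs N alpha r f b g x =
     (let i = idx xs N x; q = Qmap xs N i x in f x + alpha i r q * (g q - b q))"

(* T^{alpha_1} o ... o T^{alpha_r} g, with base functions b_r = L r f *)
definition Tcomp :: "(nat \<Rightarrow> real) \<Rightarrow> nat \<Rightarrow> (nat \<Rightarrow> nat \<Rightarrow> real \<Rightarrow> real)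
    \<Rightarrow> (nat \<Rightarrow> (real \<Rightarrow> real) \<Rightarrow> (real \<Rightarrow> real)) \<Rightarrow> (real \<Rightarrow> real) \<Rightarrow> nat
    \<Rightarrow> (real \<Rightarrow> real) \<Rightarrow> real \<Rightarrow> real" where
  "Tcomp xs N alpha L f r g = foldr (\<lambda>j h. Top xs N alpha j f (L j f) h) [1..<Suc r] g"

(* the non-stationary alpha-fractal function f^alpha_b (limit taken from g = f \<in> C_f(I)) *)
definition fractal :: "(nat \<Rightarrow> real) \<Rightarrow> nat \<Rightarrow> (nat \<Rightarrow> nat \<Rightarrow> real \<Rightarrow> real)
    \<Rightarrow> (nat \<Rightarrow> (real \<Rightarrow> real) \<Rightarrow> (real \<Rightarrow> real)) \<Rightarrow> (real \<Rightarrow> real) \<Rightarrow> real \<Rightarrow> real" where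
  "fractal xs N alpha L f x = lim (\<lambda>r. Tcomp xs N alpha L f r f x)"

definition alpha_vals :: "(nat \<Rightarrow> real) \<Rightarrow> nat \<Rightarrow> (nat \<Rightarrow> nat \<Rightarrow> real \<Rightarrow> real) \<Rightarrow> real set" where
  "alpha_vals xs N alpha = {\<bar>alpha i r x\<bar> | i r x. 1 \<le> i \<and> i \<le> N \<and> 1 \<le> r \<and> x \<in> Ivl xs N}"

definition alpha_norm :: "(nat \<Rightarrow> real) \<Rightarrow> nat \<Rightarrow> (nat \<Rightarrow> nat \<Rightarrow> real \<Rightarrow> real) \<Rightarrow> real" where
  "alpha_norm xs N alpha = Sup (alpha_vals xs N alpha)"

end

theory Submission
  imports Defs
begin

lemma lip_bdd:
  assumes "h \<in> Lip d {a..b}" "0 \<le> d" "a \<le> b"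
  shows "bdd_above ((\<lambda>x. \<bar>h x\<bar>) ` {a..b})"
proof -
  obtain K where K: "\<forall>x\<in>{a..b}. \<forall>y\<in>{a..b}. \<bar>h x - h y\<bar> \<le> K * \<bar>x - y\<bar> powr d"
    using assms(1) unfolding Lip_def by blast
  have "\<bar>h x\<bar> \<le> \<bar>h a\<bar> + \<bar>K\<bar> * (b - a) powr d" if x: "x \<in> {a..b}" for x
  proof -
    have a: "a \<in> {a..b}" using assms(3) by auto
    have "\<bar>h x - h a\<bar> \<le> K * \<bar>x - a\<bar> powr d" using K x a by blast
    also have "\<dots> \<le> \<bar>K\<bar> * \<bar>x - a\<bar> powr d" by (intro mult_right_mono) auto
    also have "\<dots> \<le> \<bar>K\<bar> * (b - a) powr d" using x assms by (intro mult_left_mono powr_mono2) auto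
    finally show ?thesis by linarith
  qed
  then show ?thesis by (intro bdd_aboveI2)
qed

lemma lip_diff:
  assumes "h \<in> Lip d S" "k \<in> Lip d S"
  shows "(\<lambda>x. h x - k x) \<in> Lip d S"
proof -
  obtain K1 where K1: "\<forall>x\<in>S. \<forall>y\<in>S. \<bar>h x - h y\<bar> \<le> K1 * \<bar>x - y\<bar> powr d"
    using assms(1) unfolding Lip_def by blast
  obtain K2 where K2: "\<forall>x\<in>S. \<forall>y\<in>S. \<bar>k x - k y\<bar> \<le> K2 * \<bar>x - y\<bar> powr d"
    using assms(2) unfolding Lip_def by blast
  have "\<bar>h x - k x - (h y - k y)\<bar> \<le> (K1 + K2) * \<bar>x - y\<bar> powr d" if "x \<in> S" "y \<in> S" for x y
  proof -
    have "\<bar>h x - k x - (h y - k y)\<bar> \<le> \<bar>h x - h y\<bar> + \<bar>k x - k y\<bar>" by linarith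
    also have "\<dots> \<le> K1 * \<bar>x - y\<bar> powr d + K2 * \<bar>x - y\<bar> powr d" using K1 K2 that
      by (intro add_mono) auto
    finally show ?thesis by (simp add: distrib_right)
  qed
  then show ?thesis unfolding Lip_def by blast
qed

lemma lip_scale:
  assumes "h \<in> Lip d S"
  shows "(\<lambda>x. c * h x) \<in> Lip d S"
proof -
  obtain K where K: "\<forall>x\<in>S. \<forall>y\<in>S. \<bar>h x - h y\<bar> \<le> K * \<bar>x - y\<bar> powr d"
    using assms(1) unfolding Lip_def by blast
  have "\<bar>c * h x - c * h y\<bar> \<le> (\<bar>c\<bar> * K) * \<bar>x - y\<bar> powr d" if "x \<in> S" "y \<in> S" for x y
  proof -
    have "\<bar>c * h x - c * h y\<bar> = \<bar>c\<bar> * \<bar>h x - h y\<bar>" by (simp add: abs_mult[symmetric] right_diff_distrib)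
    also have "\<dots> \<le> \<bar>c\<bar> * (K * \<bar>x - y\<bar> powr d)" using K that by (intro mult_left_mono) auto
    finally show ?thesis by simp
  qed
  then show ?thesis unfolding Lip_def by blast
qed

lemma Top_eq:
  "Top xs N alpha j f b h x = f x + alpha (idx xs N x) j (Qmap xs N (idx xs N x) x)
      * (h (Qmap xs N (idx xs N x) x) - b (Qmap xs N (idx xs N x) x))"
  by (simp add: Top_def Let_def)

context
  fixes xs :: "nat \<Rightarrow> real" and N :: nat and alpha :: "nat \<Rightarrow> nat \<Rightarrow> real \<Rightarrow> real"
  assumes N: "1 \<le> N"
    and part: "\<And>i. i < N \<Longrightarrow> xs i < xs (Suc i)"
    and alpha_bdd: "bdd_above (alpha_vals xs N alpha)"
begin

lemma xs_mono: "i \<le> j \<Longrightarrow> j \<le> N \<Longrightarrow> xs i \<le> xs j"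
proof (induction j)
  case 0 then show ?case by simp
next
  case (Suc j)
  show ?case
  proof (cases "i = Suc j")
    case False
    then have "xs i \<le> xs j" using Suc by auto
    also have "xs j < xs (Suc j)" using part Suc by auto
    finally show ?thesis by simp
  qed simp
qed

lemma x0N: "xs 0 < xs N"
proof -
  have "xs 0 < xs (Suc 0)" using part N by auto
  also have "\<dots> \<le> xs N" using xs_mono N by auto
  finally show ?thesis .
qed

lemma idx_props:
  assumes "x \<in> Ivl xs N"
  shows "1 \<le> idx xs N x" "idx xs N x \<le> N" "Qmap xs N (idx xs N x) x \<in> Ivl xs N"
proof -
  let ?P = "\<lambda>i. 1 \<le> i \<and> x \<le> xs i"
  have PN: "?P N" using assms N by (auto simp: Ivl_def)
  have Pi: "?P (idx xs N x)" unfolding idx_def by (rule LeastI[of ?P N, OF PN])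
  have le: "idx xs N x \<le> N" unfolding idx_def by (rule Least_le[of ?P N, OF PN])
  define i where "i = idx xs N x"
  have lo: "xs (i-1) \<le> x"
  proof (cases "i = 1")
    case True then show ?thesis using assms by (simp add: Ivl_def)
  next
    case False
    then have "i - 1 < (LEAST i. ?P i)" "1 \<le> i-1" using Pi unfolding i_def idx_def by auto
    then have "\<not> ?P (i-1)" using not_less_Least by blast
    then show ?thesis using \<open>1 \<le> i-1\<close> by auto
  qed
  have lt: "xs (i-1) < xs i" using part[of "i-1"] Pi le unfolding i_def by auto
  have hi: "x \<le> xs i" using Pi i_def by auto
  have W: "0 < xs N - xs 0" using x0N by simp
  have "0 \<le> (x - xs (i - 1)) * (xs N - xs 0) / (xs i - xs (i - 1))"
    using lo lt W by (intro divide_nonneg_pos mult_nonneg_nonneg) auto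
  moreover have "(x - xs (i - 1)) * (xs N - xs 0) / (xs i - xs (i - 1)) \<le> xs N - xs 0"
  proof -
    have "(x - xs (i - 1)) * (xs N - xs 0) \<le> (xs i - xs (i - 1)) * (xs N - xs 0)"
      using hi W by (intro mult_right_mono) auto
    then show ?thesis using lt by (simp add: pos_divide_le_eq mult.commute)
  qed
  ultimately show "Qmap xs N (idx xs N x) x \<in> Ivl xs N"
    unfolding Qmap_def Ivl_def i_def[symmetric] by auto
  show "1 \<le> idx xs N x" "idx xs N x \<le> N" using Pi le by auto
qed

lemma alpha_le:
  assumes "1 \<le> i" "i \<le> N" "1 \<le> r" "q \<in> Ivl xs N"
  shows "\<bar>alpha i r q\<bar> \<le> alpha_norm xs N alpha"
  unfolding alpha_norm_def
  by (rule cSup_upper[OF _ alpha_bdd]) (use assms in \<open>auto simp: alpha_vals_def\<close>)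

lemma alpha_norm_nonneg: "0 \<le> alpha_norm xs N alpha"
proof -
  have "xs 0 \<in> Ivl xs N" using x0N by (simp add: Ivl_def)
  then show ?thesis using alpha_le[of 1 1 "xs 0"] N by (meson abs_ge_zero order_trans order_refl)
qed

lemma contr:
  assumes "set js \<subseteq> {1..}" "\<forall>q\<in>Ivl xs N. \<bar>h1 q - h2 q\<bar> \<le> E" "x \<in> Ivl xs N"
  shows "\<bar>foldr (\<lambda>j h. Top xs N alpha j f (b j) h) js h1 x - foldr (\<lambda>j h. Top xs N alpha j f (b j) h) js h2 x\<bar>
     \<le> alpha_norm xs N alpha ^ length js * E"
  using assms(1,3)
proof (induction js arbitrary: x)
  case Nil then show ?case using assms(2) by simp
next
  case (Cons j js)
  let ?F = "foldr (\<lambda>j h. Top xs N alpha j f (b j) h) js"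
  define q where "q = Qmap xs N (idx xs N x) x"
  have q: "q \<in> Ivl xs N" using idx_props[OF Cons.prems(2)] q_def by auto
  have IH: "\<bar>?F h1 q - ?F h2 q\<bar> \<le> alpha_norm xs N alpha ^ length js * E"
    using Cons q by auto
  have al: "\<bar>alpha (idx xs N x) j q\<bar> \<le> alpha_norm xs N alpha"
    using idx_props[OF Cons.prems(2)] Cons.prems(1) q by (intro alpha_le) auto
  have "\<bar>foldr (\<lambda>j h. Top xs N alpha j f (b j) h) (j#js) h1 x - foldr (\<lambda>j h. Top xs N alpha j f (b j) h) (j#js) h2 x\<bar>
      = \<bar>alpha (idx xs N x) j q\<bar> * \<bar>?F h1 q - ?F h2 q\<bar>"
    by (simp add: Top_eq q_def[symmetric] abs_mult[symmetric] algebra_simps)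
  also have "\<dots> \<le> alpha_norm xs N alpha * (alpha_norm xs N alpha ^ length js * E)"
    using al IH alpha_norm_nonneg by (intro mult_mono) auto
  finally show ?case by simp
qed

lemma conv:
  assumes f: "f \<in> Lip d (Ivl xs N)" and d: "0 < d"
    and Lr_maps: "\<And>r h. 1 \<le> r \<Longrightarrow> h \<in> Lip d (Ivl xs N) \<Longrightarrow> Lr r h \<in> Lip d (Ivl xs N)"
    and Lr_bdd: "\<exists>M. \<forall>r h. 1 \<le> r \<longrightarrow> h \<in> Lip d (Ivl xs N) \<longrightarrow>
        supnorm (Ivl xs N) (Lr r h) \<le> M * supnorm (Ivl xs N) h"
    and a1: "alpha_norm xs N alpha < 1"
    and x: "x \<in> Ivl xs N"
  shows "convergent (\<lambda>r. Tcomp xs N alpha Lr f r f x)"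
proof -
  let ?a = "alpha_norm xs N alpha"
  let ?I = "Ivl xs N"
  obtain M where M: "\<forall>r h. 1 \<le> r \<longrightarrow> h \<in> Lip d ?I \<longrightarrow> supnorm ?I (Lr r h) \<le> M * supnorm ?I h"
    using Lr_bdd by blast
  define Sf where "Sf = supnorm ?I f"
  have bI: "bdd_above ((\<lambda>x. \<bar>h x\<bar>) ` ?I)" if "h \<in> Lip d ?I" for h
    using lip_bdd[of h d "xs 0" "xs N"] that d x0N unfolding Ivl_def by auto
  have fle: "\<bar>f q\<bar> \<le> Sf" if "q \<in> ?I" for q
    unfolding Sf_def supnorm_def by (rule cSUP_upper[OF that bI[OF f]])
  have Lle: "\<bar>Lr r f q\<bar> \<le> M * Sf" if "1 \<le> r" "q \<in> ?I" for r q
  proof -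
    have "\<bar>Lr r f q\<bar> \<le> supnorm ?I (Lr r f)" unfolding supnorm_def
      by (rule cSUP_upper[OF that(2) bI[OF Lr_maps[OF that(1) f]]])
    also have "\<dots> \<le> M * Sf" using M that f Sf_def by auto
    finally show ?thesis .
  qed
  define E where "E = ?a * (Sf + M * Sf)"
  define X where "X r = Tcomp xs N alpha Lr f r f x" for r
  let ?G = "\<lambda>j h. Top xs N alpha j f (Lr j f) h"
  have step: "\<bar>X (Suc r) - X r\<bar> \<le> ?a ^ r * E" for r
  proof -
    have e: "[1..<Suc (Suc r)] = [1..<Suc r] @ [Suc r]" by (rule upt_Suc_append) simp
    have X1: "X (Suc r) = foldr ?G [1..<Suc r] (Top xs N alpha (Suc r) f (Lr (Suc r) f) f) x"
      unfolding X_def Tcomp_def e by simp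
    have X0: "X r = foldr ?G [1..<Suc r] f x" unfolding X_def Tcomp_def by simp
    have hb: "\<forall>q\<in>?I. \<bar>Top xs N alpha (Suc r) f (Lr (Suc r) f) f q - f q\<bar> \<le> E"
    proof
      fix q assume q: "q \<in> ?I"
      define p where "p = Qmap xs N (idx xs N q) q"
      have p: "p \<in> ?I" using idx_props[OF q] p_def by auto
      have al: "\<bar>alpha (idx xs N q) (Suc r) p\<bar> \<le> ?a" using idx_props[OF q] p by (intro alpha_le) auto
      have "\<bar>Top xs N alpha (Suc r) f (Lr (Suc r) f) f q - f q\<bar>
          = \<bar>alpha (idx xs N q) (Suc r) p\<bar> * \<bar>f p - Lr (Suc r) f p\<bar>"
        by (simp add: Top_eq p_def[symmetric] abs_mult)
      also have "\<dots> \<le> ?a * (Sf + M * Sf)"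
      proof (intro mult_mono al)
        show "\<bar>f p - Lr (Suc r) f p\<bar> \<le> Sf + M * Sf"
          using fle[OF p] Lle[of "Suc r" p] p by auto
      qed (use alpha_norm_nonneg in auto)
      finally show "\<bar>Top xs N alpha (Suc r) f (Lr (Suc r) f) f q - f q\<bar> \<le> E" unfolding E_def .
    qed
    have "\<bar>X (Suc r) - X r\<bar> \<le> ?a ^ length [1..<Suc r] * E"
      unfolding X1 X0 by (rule contr[OF _ hb x]) auto
    then show ?thesis by (simp del: upt_Suc)
  qed
  have sg: "summable (\<lambda>r. ?a ^ r * E)" using alpha_norm_nonneg a1
    by (intro summable_mult2 summable_geometric) auto
  have sd: "summable (\<lambda>r. X (Suc r) - X r)"
    by (rule summable_comparison_test[OF _ sg]) (use step in auto)
  have "(\<lambda>n. X 0 + (\<Sum>r<n. X (Suc r) - X r)) \<longlonglongrightarrow> X 0 + suminf (\<lambda>r. X (Suc r) - X r)"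
    by (intro tendsto_add tendsto_const summable_LIMSEQ sd)
  then have "X \<longlonglongrightarrow> X 0 + suminf (\<lambda>r. X (Suc r) - X r)" by (simp add: sum_lessThan_telescope)
  then have "convergent X" unfolding convergent_def by blast
  then show ?thesis unfolding X_def .
qed

end

theorem mainTheorem6:
  fixes xs :: "nat \<Rightarrow> real" and N :: nat and d :: real
    and alpha :: "nat \<Rightarrow> nat \<Rightarrow> real \<Rightarrow> real"
    and Lr :: "nat \<Rightarrow> (real \<Rightarrow> real) \<Rightarrow> (real \<Rightarrow> real)"
    and L :: "(real \<Rightarrow> real) \<Rightarrow> (real \<Rightarrow> real)"
    and f g :: "real \<Rightarrow> real"
  assumes N: "1 \<le> N"
    and part: "\<And>i. i < N \<Longrightarrow> xs i < xs (Suc i)"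
    and d: "0 < d" "d \<le> 1"
    and alpha_cont: "\<And>i r. 1 \<le> i \<Longrightarrow> i \<le> N \<Longrightarrow> 1 \<le> r \<Longrightarrow> continuous_on (Ivl xs N) (alpha i r)"
    and alpha_bdd: "bdd_above (alpha_vals xs N alpha)"
    and alpha_lt1: "alpha_norm xs N alpha < 1"
    and Lr_maps: "\<And>r h. 1 \<le> r \<Longrightarrow> h \<in> Lip d (Ivl xs N) \<Longrightarrow> Lr r h \<in> Lip d (Ivl xs N)"
    and Lr_add: "\<And>r h k x. 1 \<le> r \<Longrightarrow> h \<in> Lip d (Ivl xs N) \<Longrightarrow> k \<in> Lip d (Ivl xs N) \<Longrightarrow>
        x \<in> Ivl xs N \<Longrightarrow> Lr r (\<lambda>y. h y + k y) x = Lr r h x + Lr r k x"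
    and Lr_scale: "\<And>r c h x. 1 \<le> r \<Longrightarrow> h \<in> Lip d (Ivl xs N) \<Longrightarrow>
        x \<in> Ivl xs N \<Longrightarrow> Lr r (\<lambda>y. c * h y) x = c * Lr r h x"
    and Lr_left: "\<And>r h. 1 \<le> r \<Longrightarrow> h \<in> Lip d (Ivl xs N) \<Longrightarrow> Lr r h (xs 0) = h (xs 0)"
    and Lr_right: "\<And>r h. 1 \<le> r \<Longrightarrow> h \<in> Lip d (Ivl xs N) \<Longrightarrow> Lr r h (xs N) = h (xs N)"
    and Lr_bdd: "\<exists>M. \<forall>r h. 1 \<le> r \<longrightarrow> h \<in> Lip d (Ivl xs N) \<longrightarrow>
        supnorm (Ivl xs N) (Lr r h) \<le> M * supnorm (Ivl xs N) h"
    and L_maps: "\<And>h. h \<in> Lip d (Ivl xs N) \<Longrightarrow> L h \<in> Lip d (Ivl xs N)"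
    and L_add: "\<And>h k x. h \<in> Lip d (Ivl xs N) \<Longrightarrow> k \<in> Lip d (Ivl xs N) \<Longrightarrow>
        x \<in> Ivl xs N \<Longrightarrow> L (\<lambda>y. h y + k y) x = L h x + L k x"
    and L_scale: "\<And>c h x. h \<in> Lip d (Ivl xs N) \<Longrightarrow>
        x \<in> Ivl xs N \<Longrightarrow> L (\<lambda>y. c * h y) x = c * L h x"
    and L_norm: "\<And>h. h \<in> Lip d (Ivl xs N) \<Longrightarrow>
        supnorm (Ivl xs N) (L h) = (SUP r\<in>{1..}. supnorm (Ivl xs N) (Lr r h))"
    and f: "f \<in> Lip d (Ivl xs N)" and g: "g \<in> Lip d (Ivl xs N)"
  shows "supnorm (Ivl xs N) (\<lambda>x. fractal xs N alpha Lr f x - fractal xs N alpha Lr g x)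
     \<le> 1 / (1 - alpha_norm xs N alpha) * supnorm (Ivl xs N) (\<lambda>x. f x - g x)
       + alpha_norm xs N alpha / (1 - alpha_norm xs N alpha) * supnorm (Ivl xs N) (\<lambda>x. L f x - L g x)"
proof -
  let ?a = "alpha_norm xs N alpha"
  let ?I = "Ivl xs N"
  note ctx = N part alpha_bdd
  have x0N': "xs 0 < xs N" by (rule x0N[OF ctx])
  have x0: "xs 0 \<in> ?I" using x0N' by (simp add: Ivl_def)
  have ne: "?I \<noteq> {}" using x0 by auto
  have a0: "0 \<le> ?a" by (rule alpha_norm_nonneg[OF ctx])
  have bI: "bdd_above ((\<lambda>x. \<bar>h x\<bar>) ` ?I)" if "h \<in> Lip d ?I" for h
    using lip_bdd[of h d "xs 0" "xs N"] that d x0N' unfolding Ivl_def by auto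
  define fg where "fg = (\<lambda>y. f y - g y)"
  have fgL: "fg \<in> Lip d ?I" unfolding fg_def by (rule lip_diff[OF f g])
  have mg: "(\<lambda>y. (-1) * g y) \<in> Lip d ?I" by (rule lip_scale[OF g])
  have e: "fg = (\<lambda>y. f y + (\<lambda>y. (-1) * g y) y)" unfolding fg_def by auto
  have Lr_lin: "Lr r fg q = Lr r f q - Lr r g q" if "1 \<le> r" "q \<in> ?I" for r q
  proof -
    have "Lr r fg q = Lr r f q + Lr r (\<lambda>y. (-1) * g y) q"
      unfolding e by (rule Lr_add[OF that(1) f mg that(2)])
    also have "Lr r (\<lambda>y. (-1) * g y) q = (-1) * Lr r g q" by (rule Lr_scale[OF that(1) g that(2)])
    finally show ?thesis by simp
  qed
  have L_lin: "L fg q = L f q - L g q" if "q \<in> ?I" for q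
  proof -
    have "L fg q = L f q + L (\<lambda>y. (-1) * g y) q"
      unfolding e by (rule L_add[OF f mg that])
    also have "L (\<lambda>y. (-1) * g y) q = (-1) * L g q" by (rule L_scale[OF g that])
    finally show ?thesis by simp
  qed
  define Sfg where "Sfg = supnorm ?I fg"
  define Tfg where "Tfg = supnorm ?I (\<lambda>x. L f x - L g x)"
  have Sle: "\<bar>f x - g x\<bar> \<le> Sfg" if "x \<in> ?I" for x
    using cSUP_upper[OF that bI[OF fgL]] unfolding Sfg_def supnorm_def fg_def by simp
  have Tfg_eq: "Tfg = supnorm ?I (L fg)"
    unfolding Tfg_def supnorm_def using L_lin by (intro SUP_cong) auto
  obtain M where M: "\<forall>r h. 1 \<le> r \<longrightarrow> h \<in> Lip d ?I \<longrightarrow> supnorm ?I (Lr r h) \<le> M * supnorm ?I h"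
    using Lr_bdd by blast
  have Lrle: "\<bar>Lr r f q - Lr r g q\<bar> \<le> Tfg" if "1 \<le> r" "q \<in> ?I" for r q
  proof -
    have "\<bar>Lr r f q - Lr r g q\<bar> = \<bar>Lr r fg q\<bar>" using Lr_lin that by simp
    also have "\<dots> \<le> supnorm ?I (Lr r fg)" unfolding supnorm_def
      by (rule cSUP_upper[OF that(2) bI[OF Lr_maps[OF that(1) fgL]]])
    also have "\<dots> \<le> (SUP r\<in>{1..}. supnorm ?I (Lr r fg))"
    proof (rule cSUP_upper)
      show "r \<in> {1..}" using that by simp
      show "bdd_above ((\<lambda>r. supnorm ?I (Lr r fg)) ` {1..})"
        using M fgL by (intro bdd_aboveI2[where M = "M * supnorm ?I fg"]) auto
    qed
    also have "\<dots> = Tfg" using L_norm[OF fgL] Tfg_eq by simp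
    finally show ?thesis .
  qed
  have S0: "0 \<le> Sfg" using Sle[OF x0] by linarith
  have T0: "0 \<le> Tfg" using Lrle[of 1 "xs 0"] x0 by linarith
  define Bd where "Bd = (Sfg + ?a * Tfg) / (1 - ?a)"
  have B0: "0 \<le> Bd" unfolding Bd_def using S0 T0 a0 alpha_lt1 by auto
  have Bd_eq: "Sfg + ?a * (Bd + Tfg) = Bd" unfolding Bd_def using alpha_lt1
    by (simp add: field_simps)
  have SB: "Sfg \<le> Bd" using Bd_eq a0 B0 T0 by (smt (verit) mult_nonneg_nonneg)
  let ?Gf = "\<lambda>j h. Top xs N alpha j f (Lr j f) h"
  let ?Gg = "\<lambda>j h. Top xs N alpha j g (Lr j g) h"
  have A: "\<bar>foldr ?Gf js f x - foldr ?Gg js g x\<bar> \<le> Bd" if "set js \<subseteq> {1..}" "x \<in> ?I" for js x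
    using that
  proof (induction js arbitrary: x)
    case Nil then show ?case using Sle SB by fastforce
  next
    case (Cons j js)
    define q where "q = Qmap xs N (idx xs N x) x"
    have q: "q \<in> ?I" using idx_props[OF ctx Cons.prems(2)] q_def by auto
    have IH: "\<bar>foldr ?Gf js f q - foldr ?Gg js g q\<bar> \<le> Bd" using Cons q by auto
    have j: "1 \<le> j" using Cons.prems by auto
    have al: "\<bar>alpha (idx xs N x) j q\<bar> \<le> ?a"
      using idx_props[OF ctx Cons.prems(2)] j q by (intro alpha_le[OF ctx]) auto
    have "foldr ?Gf (j#js) f x - foldr ?Gg (j#js) g x
       = (f x - g x) + alpha (idx xs N x) j q * ((foldr ?Gf js f q - foldr ?Gg js g q) - (Lr j f q - Lr j g q))"
      by (simp add: Top_eq q_def[symmetric] algebra_simps)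
    then have "\<bar>foldr ?Gf (j#js) f x - foldr ?Gg (j#js) g x\<bar>
       \<le> \<bar>f x - g x\<bar> + \<bar>alpha (idx xs N x) j q\<bar> * \<bar>(foldr ?Gf js f q - foldr ?Gg js g q) - (Lr j f q - Lr j g q)\<bar>"
      by (simp add: abs_mult[symmetric] abs_triangle_ineq)
    also have "\<dots> \<le> Sfg + ?a * (Bd + Tfg)"
    proof (intro add_mono mult_mono al)
      show "\<bar>f x - g x\<bar> \<le> Sfg" by (rule Sle[OF Cons.prems(2)])
      show "\<bar>(foldr ?Gf js f q - foldr ?Gg js g q) - (Lr j f q - Lr j g q)\<bar> \<le> Bd + Tfg"
        using IH Lrle[OF j q] by linarith
    qed (use a0 in auto)
    finally show ?case using Bd_eq by simp
  qed
  have pt: "\<bar>fractal xs N alpha Lr f x - fractal xs N alpha Lr g x\<bar> \<le> Bd" if x: "x \<in> ?I" for x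
  proof -
    have cf: "(\<lambda>r. Tcomp xs N alpha Lr f r f x) \<longlonglongrightarrow> fractal xs N alpha Lr f x"
      unfolding fractal_def convergent_LIMSEQ_iff[symmetric]
      by (rule conv[OF ctx f d(1) Lr_maps Lr_bdd alpha_lt1 x])
    have cg: "(\<lambda>r. Tcomp xs N alpha Lr g r g x) \<longlonglongrightarrow> fractal xs N alpha Lr g x"
      unfolding fractal_def convergent_LIMSEQ_iff[symmetric]
      by (rule conv[OF ctx g d(1) Lr_maps Lr_bdd alpha_lt1 x])
    have "(\<lambda>r. \<bar>Tcomp xs N alpha Lr f r f x - Tcomp xs N alpha Lr g r g x\<bar>)
        \<longlonglongrightarrow> \<bar>fractal xs N alpha Lr f x - fractal xs N alpha Lr g x\<bar>"
      by (intro tendsto_rabs tendsto_diff cf cg)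
    moreover have "\<forall>r\<ge>0. \<bar>Tcomp xs N alpha Lr f r f x - Tcomp xs N alpha Lr g r g x\<bar> \<le> Bd"
    proof (intro allI impI)
      fix r :: nat
      show "\<bar>Tcomp xs N alpha Lr f r f x - Tcomp xs N alpha Lr g r g x\<bar> \<le> Bd"
        unfolding Tcomp_def by (rule A) (use x in \<open>auto simp del: upt_Suc\<close>)
    qed
    ultimately show ?thesis by (intro LIMSEQ_le_const2) auto
  qed
  have "supnorm ?I (\<lambda>x. fractal xs N alpha Lr f x - fractal xs N alpha Lr g x) \<le> Bd"
    unfolding supnorm_def by (rule cSUP_least[OF ne pt])
  also have "Bd = 1 / (1 - ?a) * Sfg + ?a / (1 - ?a) * Tfg"
    unfolding Bd_def by (simp add: add_divide_distrib)
  finally show ?thesis unfolding Sfg_def Tfg_def fg_def .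
qed

end
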